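(* Let $\mathcal{X}$ be finite, $\mathcal{C}\subseteq\{\pm1\}^{\mathcal{X}}$ a concept class with concept matrix $W\in\mathbb{R}^{\mathcal{C}\times\mathcal{X}}$ and difference matrix $D\in\mathbb{R}^{\mathcal{C}^2\times\mathcal{X}}$, and let $\alpha\ge0$. Then $\gamma_2(D,\alpha)\le\gamma_2(W,\alpha)$. Conversely, $\gamma_2(W,\alpha)\le 2\gamma_2(D,\alpha/2)+1$, and if $\mathcal{C}$ is closed under negation (i.e. $c\in\mathcal{C}\Rightarrow -c\in\mathcal{C}$) then $\gamma_2(W,\alpha)\le\gamma_2(D,\alpha)$.
   Context: The concept matrix $W$ has entries $w_{c,x}=c(x)$. The difference matrix $D$ has rows indexed by ordered pairs $(c,c')\in\mathcal{C}^2$ and entries $d_{(c,c'),x}=\frac12(c(x)-c'(x))\in\{-1,0,1\}$. $\gamma_2(M)=\min\{\|R\|_{2\to\infty}\|A\|_{1\to2}:RA=M\}$, where $\|\cdot\|_{2\to\infty}$ is the maximum Euclidean row norm and $\|\cdot\|_{1\to2}$ the maximum Euclidean column norm; $\gamma_2(M,\alpha)=\min\{\gamma_2(\widetilde M):\max_{i,j}|\widetilde m_{ij}-m_{ij}|\le\alpha\}$. *)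

theory Defs
  imports Complex_Main
begin

text \<open>Matrices are functions row-index \<Rightarrow> column-index \<Rightarrow> real, considered on finite
  index sets Rs (rows) and Cs (columns).\<close>

definition row_norm_2inf :: "'r set \<Rightarrow> nat \<Rightarrow> ('r \<Rightarrow> nat \<Rightarrow> real) \<Rightarrow> real" where
  "row_norm_2inf Rs k R = Max (insert 0 ((\<lambda>i. sqrt (\<Sum>l<k. (R i l)^2)) ` Rs))"

definition col_norm_12 :: "'c set \<Rightarrow> nat \<Rightarrow> (nat \<Rightarrow> 'c \<Rightarrow> real) \<Rightarrow> real" where
  "col_norm_12 Cs k A = Max (insert 0 ((\<lambda>j. sqrt (\<Sum>l<k. (A l j)^2)) ` Cs))"

definition gamma2 :: "'r set \<Rightarrow> 'c set \<Rightarrow> ('r \<Rightarrow> 'c \<Rightarrow> real) \<Rightarrow> real" where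
  "gamma2 Rs Cs M = Inf {row_norm_2inf Rs k R * col_norm_12 Cs k A | k R A.
      \<forall>i\<in>Rs. \<forall>j\<in>Cs. (\<Sum>l<k. R i l * A l j) = M i j}"

definition gamma2_approx :: "'r set \<Rightarrow> 'c set \<Rightarrow> ('r \<Rightarrow> 'c \<Rightarrow> real) \<Rightarrow> real \<Rightarrow> real" where
  "gamma2_approx Rs Cs M \<alpha> = Inf {gamma2 Rs Cs M' | M'.
      \<forall>i\<in>Rs. \<forall>j\<in>Cs. \<bar>M' i j - M i j\<bar> \<le> \<alpha>}"

definition concept_matrix :: "('x \<Rightarrow> real) \<Rightarrow> 'x \<Rightarrow> real" where
  "concept_matrix c x = c x"

definition diff_matrix :: "('x \<Rightarrow> real) \<times> ('x \<Rightarrow> real) \<Rightarrow> 'x \<Rightarrow> real" where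
  "diff_matrix p x = (fst p x - snd p x) / 2"

end

theory Submission
  imports Defs "HOL-Analysis.L2_Norm"
begin

definition fact :: "'r set \<Rightarrow> 'c set \<Rightarrow> ('r \<Rightarrow> 'c \<Rightarrow> real) \<Rightarrow> nat \<Rightarrow> ('r \<Rightarrow> nat \<Rightarrow> real) \<Rightarrow> (nat \<Rightarrow> 'c \<Rightarrow> real) \<Rightarrow> bool" where
  "fact Rs Cs M k R A \<longleftrightarrow> (\<forall>i\<in>Rs. \<forall>j\<in>Cs. (\<Sum>l<k. R i l * A l j) = M i j)"

lemma row_nonneg: "finite Rs \<Longrightarrow> 0 \<le> row_norm_2inf Rs k R"
  unfolding row_norm_2inf_def by (simp add: Max_ge)

lemma row_ge: "finite Rs \<Longrightarrow> i \<in> Rs \<Longrightarrow> sqrt (\<Sum>l<k. (R i l)^2) \<le> row_norm_2inf Rs k R"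
  unfolding row_norm_2inf_def by (simp add: Max_ge)

lemma row_le: "finite Rs \<Longrightarrow> 0 \<le> B \<Longrightarrow> (\<And>i. i \<in> Rs \<Longrightarrow> sqrt (\<Sum>l<k. (R i l)^2) \<le> B) \<Longrightarrow> row_norm_2inf Rs k R \<le> B"
  unfolding row_norm_2inf_def by (simp add: Max_le_iff)

lemma col_nonneg: "finite Cs \<Longrightarrow> 0 \<le> col_norm_12 Cs k A"
  unfolding col_norm_12_def by (simp add: Max_ge)

lemma col_ge: "finite Cs \<Longrightarrow> j \<in> Cs \<Longrightarrow> sqrt (\<Sum>l<k. (A l j)^2) \<le> col_norm_12 Cs k A"
  unfolding col_norm_12_def by (simp add: Max_ge)

lemma col_le: "finite Cs \<Longrightarrow> 0 \<le> B \<Longrightarrow> (\<And>j. j \<in> Cs \<Longrightarrow> sqrt (\<Sum>l<k. (A l j)^2) \<le> B) \<Longrightarrow> col_norm_12 Cs k A \<le> B"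
  unfolding col_norm_12_def by (simp add: Max_le_iff)

lemma fact_exists: "finite Cs \<Longrightarrow> \<exists>k R A. fact Rs Cs M k R A"
proof -
  assume f: "finite Cs"
  then obtain h where h: "bij_betw h {0..<card Cs} Cs" using ex_bij_betw_nat_finite by blast
  have "fact Rs Cs M (card Cs) (\<lambda>i l. M i (h l)) (\<lambda>l j. if h l = j then 1 else 0)"
    unfolding fact_def
  proof (intro ballI)
    fix i j assume j: "j \<in> Cs"
    have "(\<Sum>l<card Cs. M i (h l) * (if h l = j then 1 else 0)) = (\<Sum>y\<in>Cs. M i y * (if y = j then 1 else 0))"
      using sum.reindex_bij_betw[OF h, of "\<lambda>y. M i y * (if y = j then 1 else 0)"]
      by (simp add: atLeast0LessThan)
    also have "\<dots> = M i j" using f j by (simp add: if_distrib cong: if_cong)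
    finally show "(\<Sum>l<card Cs. M i (h l) * (if h l = j then 1 else 0)) = M i j" .
  qed
  thus ?thesis by blast
qed

lemma gamma2_lower: "finite Rs \<Longrightarrow> finite Cs \<Longrightarrow> fact Rs Cs M k R A \<Longrightarrow>
   gamma2 Rs Cs M \<le> row_norm_2inf Rs k R * col_norm_12 Cs k A"
  unfolding gamma2_def
  apply (rule cInf_lower)
   apply (auto simp: fact_def)[1]
  apply (rule bdd_belowI[where m=0])
  apply (auto intro!: mult_nonneg_nonneg row_nonneg col_nonneg)
  done

lemma gamma2_greatest: "finite Cs \<Longrightarrow> (\<And>k R A. fact Rs Cs M k R A \<Longrightarrow> b \<le> row_norm_2inf Rs k R * col_norm_12 Cs k A) \<Longrightarrow>
   b \<le> gamma2 Rs Cs M"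
  unfolding gamma2_def
  apply (rule cInf_greatest)
  using fact_exists[of Cs Rs M] apply (auto simp: fact_def)
  done

lemma gamma2_nonneg: "finite Rs \<Longrightarrow> finite Cs \<Longrightarrow> 0 \<le> gamma2 Rs Cs M"
  by (rule gamma2_greatest) (auto intro!: mult_nonneg_nonneg row_nonneg col_nonneg)

lemma approx_lower: "finite Rs \<Longrightarrow> finite Cs \<Longrightarrow> (\<forall>i\<in>Rs. \<forall>j\<in>Cs. \<bar>M' i j - M i j\<bar> \<le> \<alpha>) \<Longrightarrow>
   gamma2_approx Rs Cs M \<alpha> \<le> gamma2 Rs Cs M'"
  unfolding gamma2_approx_def
  apply (rule cInf_lower)
   apply blast
  apply (rule bdd_belowI[where m=0])
  apply (auto intro!: gamma2_nonneg)
  done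

lemma approx_greatest: assumes "0 \<le> \<alpha>" "\<And>M'. \<forall>i\<in>Rs. \<forall>j\<in>Cs. \<bar>M' i j - M i j\<bar> \<le> \<alpha> \<Longrightarrow> b \<le> gamma2 Rs Cs M'"
  shows "b \<le> gamma2_approx Rs Cs M \<alpha>"
proof -
  have "gamma2 Rs Cs M \<in> {gamma2 Rs Cs M' |M'. \<forall>i\<in>Rs. \<forall>j\<in>Cs. \<bar>M' i j - M i j\<bar> \<le> \<alpha>}"
    using assms(1) by auto
  thus ?thesis unfolding gamma2_approx_def
    by (intro cInf_greatest) (auto intro: assms(2))
qed

lemma finite_C: assumes "\<forall>c\<in>C. \<forall>x. c x = 1 \<or> c x = -1" shows "finite (C :: ('x::finite \<Rightarrow> real) set)"
proof -
  have "C \<subseteq> (\<lambda>S. \<lambda>x. if x \<in> S then 1 else -1) ` (UNIV :: 'x set set)"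
  proof
    fix c assume "c \<in> C"
    hence "c = (\<lambda>x. if x \<in> {x. c x = 1} then 1 else -1)" using assms by (auto intro!: ext) (metis)
    thus "c \<in> (\<lambda>S. \<lambda>x. if x \<in> S then 1 else -1) ` (UNIV :: 'x set set)" by blast
  qed
  thus ?thesis by (rule finite_subset) simp
qed


lemma l2_half_diff: "sqrt (\<Sum>l<k. ((u l - v l) / 2)^2) \<le> (sqrt (\<Sum>l<k. (u l)^2) + sqrt (\<Sum>l<k. (v l)^2)) / 2"
proof -
  have "L2_set (\<lambda>l. u l * (1/2) + (- v l) * (1/2)) {..<k} \<le> L2_set (\<lambda>l. u l * (1/2)) {..<k} + L2_set (\<lambda>l. (- v l) * (1/2)) {..<k}"
    by (rule L2_set_triangle_ineq)
  also have "\<dots> = L2_set u {..<k} * (1/2) + L2_set (\<lambda>l. - v l) {..<k} * (1/2)"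
    by (simp only: L2_set_left_distrib[symmetric] )
  finally have *: "L2_set (\<lambda>l. u l * (1/2) + (- v l) * (1/2)) {..<k} \<le> L2_set u {..<k} * (1/2) + L2_set (\<lambda>l. - v l) {..<k} * (1/2)" .
  have e1: "sqrt (\<Sum>l<k. ((u l - v l) / 2)^2) = L2_set (\<lambda>l. u l * (1/2) + (- v l) * (1/2)) {..<k}"
    unfolding L2_set_def by (intro arg_cong[where f=sqrt] sum.cong) (auto simp: diff_divide_distrib)
  have e2: "L2_set (\<lambda>l. - v l) {..<k} = sqrt (\<Sum>l<k. (v l)^2)" unfolding L2_set_def by simp
  show ?thesis using * unfolding e1 e2 by (simp add: L2_set_def)
qed

lemma part1: assumes fin: "finite C" and a: "0 \<le> \<alpha>"
  shows "gamma2_approx (C \<times> C) (UNIV::'x::finite set) diff_matrix \<alpha> \<le> gamma2_approx C UNIV concept_matrix \<alpha>"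
proof (rule approx_greatest[OF a])
  fix W' :: "('x \<Rightarrow> real) \<Rightarrow> 'x \<Rightarrow> real"
  assume close: "\<forall>i\<in>C. \<forall>j\<in>UNIV. \<bar>W' i j - concept_matrix i j\<bar> \<le> \<alpha>"
  define D' where "D' p x = (W' (fst p) x - W' (snd p) x)/2" for p x
  have closeD: "\<forall>p\<in>C\<times>C. \<forall>x\<in>UNIV. \<bar>D' p x - diff_matrix p x\<bar> \<le> \<alpha>"
  proof (intro ballI)
    fix p x assume p: "p \<in> C \<times> C"
    have "\<bar>W' (fst p) x - fst p x\<bar> \<le> \<alpha>" "\<bar>W' (snd p) x - snd p x\<bar> \<le> \<alpha>"
      using close p by (auto simp: concept_matrix_def)
    thus "\<bar>D' p x - diff_matrix p x\<bar> \<le> \<alpha>"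
      unfolding D'_def diff_matrix_def by (simp add: abs_le_iff field_simps) 
  qed
  have "gamma2_approx (C \<times> C) UNIV diff_matrix \<alpha> \<le> gamma2 (C\<times>C) UNIV D'"
    using fin closeD by (intro approx_lower) auto
  also have "\<dots> \<le> gamma2 C UNIV W'"
  proof (rule gamma2_greatest)
    fix k R A assume f: "fact C UNIV W' k R A"
    define R' where "R' p l = (R (fst p) l - R (snd p) l)/2" for p l
    have f': "fact (C\<times>C) UNIV D' k R' A"
      using f unfolding fact_def D'_def R'_def
      by (auto simp: sum_subtractf left_diff_distrib sum_divide_distrib[symmetric])
    have "row_norm_2inf (C\<times>C) k R' \<le> row_norm_2inf C k R"
    proof (rule row_le)
      fix p assume p: "p \<in> C \<times> C"
      have "sqrt (\<Sum>l<k. (R' p l)^2) \<le> (sqrt (\<Sum>l<k. (R (fst p) l)^2) + sqrt (\<Sum>l<k. (R (snd p) l)^2)) / 2"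
        unfolding R'_def by (rule l2_half_diff)
      also have "\<dots> \<le> (row_norm_2inf C k R + row_norm_2inf C k R) / 2"
        using p fin by (intro divide_right_mono add_mono row_ge) auto
      finally show "sqrt (\<Sum>l<k. (R' p l)^2) \<le> row_norm_2inf C k R" by simp
    qed (auto intro!: row_nonneg simp: fin)
    hence "gamma2 (C\<times>C) UNIV D' \<le> row_norm_2inf C k R * col_norm_12 UNIV k A"
      using gamma2_lower[OF _ _ f'] fin col_nonneg[of "UNIV::'x set"]
      by (meson finite_SigmaI finite_UNIV mult_right_mono order_trans)
    thus "gamma2 (C\<times>C) UNIV D' \<le> row_norm_2inf C k R * col_norm_12 UNIV k A" .
  qed simp
  finally show "gamma2_approx (C \<times> C) UNIV diff_matrix \<alpha> \<le> gamma2 C UNIV W'" .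
qed

lemma part3: assumes fin: "finite C" and a: "0 \<le> \<alpha>" and neg: "\<forall>c\<in>C. (\<lambda>x. - c x) \<in> C"
  shows "gamma2_approx C (UNIV::'x::finite set) concept_matrix \<alpha> \<le> gamma2_approx (C \<times> C) UNIV diff_matrix \<alpha>"
proof (rule approx_greatest[OF a])
  fix D' :: "(('x \<Rightarrow> real) \<times> ('x \<Rightarrow> real)) \<Rightarrow> 'x \<Rightarrow> real"
  assume close: "\<forall>i\<in>C\<times>C. \<forall>j\<in>UNIV. \<bar>D' i j - diff_matrix i j\<bar> \<le> \<alpha>"
  define W' where "W' c x = D' (c, \<lambda>x. - c x) x" for c x
  have closeW: "\<forall>c\<in>C. \<forall>x\<in>UNIV. \<bar>W' c x - concept_matrix c x\<bar> \<le> \<alpha>"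
  proof (intro ballI)
    fix c x assume c: "c \<in> C"
    hence "(c, \<lambda>x. - c x) \<in> C \<times> C" using neg by auto
    thus "\<bar>W' c x - concept_matrix c x\<bar> \<le> \<alpha>" using close
      unfolding W'_def concept_matrix_def diff_matrix_def by fastforce
  qed
  have "gamma2_approx C UNIV concept_matrix \<alpha> \<le> gamma2 C UNIV W'"
    using fin closeW by (intro approx_lower) auto
  also have "\<dots> \<le> gamma2 (C\<times>C) UNIV D'"
  proof (rule gamma2_greatest)
    fix k R A assume f: "fact (C\<times>C) UNIV D' k R A"
    define R' where "R' c l = R (c, \<lambda>x. - c x) l" for c l
    have f': "fact C UNIV W' k R' A"
      using f neg unfolding fact_def W'_def R'_def by auto
    have "row_norm_2inf C k R' \<le> row_norm_2inf (C\<times>C) k R"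
    proof (rule row_le)
      fix c assume c: "c \<in> C"
      hence "(c, \<lambda>x. - c x) \<in> C \<times> C" using neg by auto
      thus "sqrt (\<Sum>l<k. (R' c l)^2) \<le> row_norm_2inf (C\<times>C) k R"
        unfolding R'_def using fin by (intro row_ge) auto
    qed (auto intro!: row_nonneg simp: fin)
    hence "gamma2 C UNIV W' \<le> row_norm_2inf (C\<times>C) k R * col_norm_12 UNIV k A"
      using gamma2_lower[OF _ _ f'] fin col_nonneg[of "UNIV::'x set"]
      by (meson finite_UNIV mult_right_mono order_trans)
    thus "gamma2 C UNIV W' \<le> row_norm_2inf (C\<times>C) k R * col_norm_12 UNIV k A" .
  qed simp
  finally show "gamma2_approx C UNIV concept_matrix \<alpha> \<le> gamma2 (C\<times>C) UNIV D'" .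
qed


lemma sq_bound: fixes k :: nat assumes "sqrt (\<Sum>l<k. (f l)^2) \<le> r" shows "(\<Sum>l<k. (f l :: real)^2) \<le> r^2"
proof -
  have n: "0 \<le> (\<Sum>l<k. (f l)^2)" by (intro sum_nonneg) simp
  have "(\<Sum>l<k. (f l)^2) = (sqrt (\<Sum>l<k. (f l)^2))^2" by (rule real_sqrt_pow2[symmetric, OF n])
  also have "\<dots> \<le> r^2" using assms n by (intro power_mono) auto
  finally show ?thesis .
qed

lemma sq_zero: fixes k :: nat assumes "sqrt (\<Sum>l<k. (f l)^2) \<le> 0" "l < k" shows "(f l :: real) = 0"
proof -
  have "(\<Sum>l<k. (f l)^2) \<le> 0" using sq_bound[OF assms(1)] by simp
  hence "(\<Sum>l<k. (f l)^2) = 0" by (intro antisym) (auto simp: sum_nonneg)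
  hence "\<forall>l\<in>{..<k}. f l = 0" using sum_nonneg_eq_0_iff[of "{..<k}" "\<lambda>l. (f l)^2"] by simp
  thus ?thesis using assms(2) by auto
qed

lemma part2_main:
  fixes C :: "('x::finite \<Rightarrow> real) set"
  assumes fin: "finite C" and pm: "\<forall>c\<in>C. \<forall>x. c x = 1 \<or> c x = -1" and c0: "c0 \<in> C"
    and f: "fact (C\<times>C) UNIV D' k R A"
  defines "W' \<equiv> \<lambda>c x. 2 * D' (c, c0) x + c0 x"
  shows "gamma2 C UNIV W' \<le> 2 * (row_norm_2inf (C\<times>C) k R * col_norm_12 UNIV k A) + 1"
proof -
  define r where "r = row_norm_2inf (C\<times>C) k R"
  define a where "a = col_norm_12 (UNIV::'x set) k A"
  have r0: "0 \<le> r" unfolding r_def using fin by (simp add: row_nonneg)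
  have a0: "0 \<le> a" unfolding a_def by (simp add: col_nonneg)
  have c0sq: "(c0 x)^2 = 1" for x using pm c0 by (metis power2_minus power_one)
  have rowR: "(\<Sum>l<k. (R (c, c0) l)^2) \<le> r^2" if "c \<in> C" for c
    unfolding r_def using that c0 fin by (intro sq_bound row_ge) auto
  have colA: "(\<Sum>l<k. (A l x)^2) \<le> a^2" for x
    unfolding a_def by (intro sq_bound col_ge) auto
  show ?thesis
  proof (cases "r = 0 \<or> a = 0")
    case True
    have zero: "D' (c, c0) x = 0" if c: "c \<in> C" for c x
    proof -
      have "(\<Sum>l<k. R (c, c0) l * A l x) = 0"
      proof (rule sum.neutral, intro ballI)
        fix l assume l: "l \<in> {..<k}"
        show "R (c, c0) l * A l x = 0"
        proof (cases "r = 0")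
          case True
          have "sqrt (\<Sum>l<k. (R (c, c0) l)^2) \<le> 0"
            using row_ge[where i="(c,c0)" and Rs="C\<times>C" and k=k and R=R] fin c c0 True unfolding r_def by auto
          thus ?thesis using sq_zero l by auto
        next
          case False
          hence "a = 0" using \<open>r = 0 \<or> a = 0\<close> by auto
          have "sqrt (\<Sum>l<k. (A l x)^2) \<le> col_norm_12 UNIV k A" by (rule col_ge) auto
          hence "sqrt (\<Sum>l<k. (A l x)^2) \<le> 0" using \<open>a = 0\<close> unfolding a_def by auto
          thus ?thesis using sq_zero[of "\<lambda>l. A l x" k] l by auto
        qed
      qed
      thus ?thesis using f c c0 unfolding fact_def by auto
    qed
    have f1: "fact C UNIV W' 1 (\<lambda>c l. 1) (\<lambda>l x. c0 x)"
      unfolding fact_def W'_def using zero by simp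
    have "row_norm_2inf C 1 (\<lambda>c l. 1) \<le> 1" by (rule row_le) (auto simp: fin)
    moreover have "col_norm_12 UNIV 1 (\<lambda>l x. c0 x) \<le> 1" by (rule col_le) (auto simp: c0sq)
    ultimately have "gamma2 C UNIV W' \<le> 1"
      using gamma2_lower[OF fin _ f1] row_nonneg[OF fin, of 1 "\<lambda>c l. 1"]
        col_nonneg[of "UNIV::'x set" 1 "\<lambda>l x. c0 x"]
      by (smt (verit) finite_UNIV mult_le_one)
    thus ?thesis using r0 a0 unfolding r_def[symmetric] a_def[symmetric] by (smt (verit) mult_nonneg_nonneg)
  next
    case False
    hence rp: "0 < r" and ap: "0 < a" using r0 a0 by auto
    define t where "t = sqrt (a / (2*r))"
    have tp: "0 < t" unfolding t_def using rp ap by simp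
    have t2: "t^2 = a / (2*r)" unfolding t_def using rp ap by simp
    define R1 where "R1 c l = (if l < k then 2*t*R (c, c0) l else 1)" for c l
    define A1 where "A1 l x = (if l < k then A l x / t else c0 x)" for l x
    have f1: "fact C UNIV W' (Suc k) R1 A1"
      unfolding fact_def
    proof (intro ballI)
      fix c x assume c: "c \<in> C"
      have "(\<Sum>l<k. R1 c l * A1 l x) = (\<Sum>l<k. 2 * (R (c, c0) l * A l x))"
        using tp by (intro sum.cong) (auto simp: R1_def A1_def)
      also have "\<dots> = 2 * D' (c, c0) x" using f c c0 unfolding fact_def by (simp add: sum_distrib_left[symmetric])
      finally show "(\<Sum>l<Suc k. R1 c l * A1 l x) = W' c x"
        unfolding W'_def by (simp add: R1_def A1_def)
    qed
    have "row_norm_2inf C (Suc k) R1 \<le> sqrt (2*a*r + 1)"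
    proof (rule row_le)
      fix c assume c: "c \<in> C"
      have "(\<Sum>l<Suc k. (R1 c l)^2) = (\<Sum>l<k. (2*t)^2 * (R (c, c0) l)^2) + 1"
        by (simp add: R1_def power_mult_distrib)
      also have "\<dots> = (2*t)^2 * (\<Sum>l<k. (R (c, c0) l)^2) + 1" by (simp add: sum_distrib_left)
      also have "\<dots> \<le> (2*t)^2 * r^2 + 1" using rowR[OF c] by (intro add_right_mono mult_left_mono) auto
      also have "(2*t)^2 * r^2 = 2*a*r" using rp by (simp add: power_mult_distrib t2 power2_eq_square[symmetric] field_simps)
      finally show "sqrt (\<Sum>l<Suc k. (R1 c l)^2) \<le> sqrt (2*a*r + 1)" by simp
    qed (use rp ap in \<open>auto simp: fin\<close>)
    moreover have "col_norm_12 UNIV (Suc k) A1 \<le> sqrt (2*a*r + 1)"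
    proof (rule col_le)
      fix x :: 'x
      have "(\<Sum>l<Suc k. (A1 l x)^2) = (\<Sum>l<k. (A l x)^2 / t^2) + 1"
        by (simp add: A1_def power_divide c0sq)
      also have "\<dots> = (\<Sum>l<k. (A l x)^2) / t^2 + 1" by (simp add: sum_divide_distrib)
      also have "\<dots> \<le> a^2 / t^2 + 1" using colA[of x] tp by (intro add_right_mono divide_right_mono) auto
      also have "a^2 / t^2 = 2*a*r" using rp ap by (simp add: t2 field_simps power2_eq_square[symmetric])
      finally show "sqrt (\<Sum>l<Suc k. (A1 l x)^2) \<le> sqrt (2*a*r + 1)" by simp
    qed (use rp ap in \<open>auto simp: fin\<close>)
    ultimately have "row_norm_2inf C (Suc k) R1 * col_norm_12 UNIV (Suc k) A1 \<le> sqrt (2*a*r + 1) * sqrt (2*a*r + 1)"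
      using row_nonneg[OF fin, of "Suc k" R1] col_nonneg[of "UNIV::'x set" "Suc k" A1] rp ap by (intro mult_mono) auto
    also have "\<dots> = 2*a*r + 1" using rp ap by simp
    finally have "gamma2 C UNIV W' \<le> 2*a*r + 1"
      using gamma2_lower[OF fin _ f1] by simp
    thus ?thesis unfolding r_def[symmetric] a_def[symmetric] by (simp add: mult_ac)
  qed
qed

theorem lemma3p3:
  fixes C :: "('x::finite \<Rightarrow> real) set" and \<alpha> :: real
  assumes "\<forall>c\<in>C. \<forall>x. c x = 1 \<or> c x = -1"
    and "\<alpha> \<ge> 0"
  shows "gamma2_approx (C \<times> C) UNIV diff_matrix \<alpha> \<le> gamma2_approx C UNIV concept_matrix \<alpha>
    \<and> gamma2_approx C UNIV concept_matrix \<alpha> \<le> 2 * gamma2_approx (C \<times> C) UNIV diff_matrix (\<alpha> / 2) + 1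
    \<and> ((\<forall>c\<in>C. (\<lambda>x. - c x) \<in> C) \<longrightarrow>
         gamma2_approx C UNIV concept_matrix \<alpha> \<le> gamma2_approx (C \<times> C) UNIV diff_matrix \<alpha>)"
proof -
  have fin: "finite C" using finite_C[OF assms(1)] .
  have a2: "0 \<le> \<alpha> / 2" using assms(2) by simp
  have nnD: "0 \<le> gamma2_approx (C \<times> C) (UNIV::'x set) diff_matrix (\<alpha> / 2)"
    by (rule approx_greatest[OF a2]) (simp add: gamma2_nonneg fin)
  have p2: "gamma2_approx C (UNIV::'x set) concept_matrix \<alpha> \<le> 2 * gamma2_approx (C \<times> C) UNIV diff_matrix (\<alpha> / 2) + 1"
  proof (cases "C = {}")
    case True
    obtain k R A where f: "fact C (UNIV::'x set) concept_matrix k R A" using fact_exists[of "UNIV::'x set" C concept_matrix] by auto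
    have "gamma2_approx C (UNIV::'x set) concept_matrix \<alpha> \<le> gamma2 C UNIV concept_matrix"
      using fin assms(2) by (intro approx_lower) auto
    also have "\<dots> \<le> row_norm_2inf C k R * col_norm_12 UNIV k A" using gamma2_lower[OF fin _ f] by simp
    also have "\<dots> = 0" using True by (simp add: row_norm_2inf_def)
    finally show ?thesis using nnD by simp
  next
    case False
    then obtain c0 where c0: "c0 \<in> C" by auto
    have "(gamma2_approx C (UNIV::'x set) concept_matrix \<alpha> - 1) / 2 \<le> gamma2_approx (C \<times> C) UNIV diff_matrix (\<alpha> / 2)"
    proof (rule approx_greatest[OF a2])
      fix D' :: "(('x \<Rightarrow> real) \<times> ('x \<Rightarrow> real)) \<Rightarrow> 'x \<Rightarrow> real"
      assume close: "\<forall>i\<in>C\<times>C. \<forall>j\<in>UNIV. \<bar>D' i j - diff_matrix i j\<bar> \<le> \<alpha> / 2"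
      define W' where "W' = (\<lambda>c x. 2 * D' (c, c0) x + c0 x)"
      have closeW: "\<forall>c\<in>C. \<forall>x\<in>UNIV. \<bar>W' c x - concept_matrix c x\<bar> \<le> \<alpha>"
      proof (intro ballI)
        fix c x assume c: "c \<in> C"
        hence "\<bar>D' (c, c0) x - diff_matrix (c, c0) x\<bar> \<le> \<alpha> / 2" using close c0 by auto
        thus "\<bar>W' c x - concept_matrix c x\<bar> \<le> \<alpha>"
          unfolding W'_def concept_matrix_def diff_matrix_def by (simp add: abs_le_iff field_simps)
      qed
      have g1: "gamma2_approx C UNIV concept_matrix \<alpha> \<le> gamma2 C UNIV W'"
        using fin closeW by (intro approx_lower) auto
      have "(gamma2 C UNIV W' - 1) / 2 \<le> gamma2 (C\<times>C) UNIV D'"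
      proof (rule gamma2_greatest)
        fix k R A assume f: "fact (C\<times>C) UNIV D' k R A"
        have "gamma2 C UNIV W' \<le> 2 * (row_norm_2inf (C\<times>C) k R * col_norm_12 UNIV k A) + 1"
          unfolding W'_def by (rule part2_main[OF fin assms(1) c0 f])
        thus "(gamma2 C UNIV W' - 1) / 2 \<le> row_norm_2inf (C\<times>C) k R * col_norm_12 UNIV k A" by simp
      qed simp
      thus "(gamma2_approx C UNIV concept_matrix \<alpha> - 1) / 2 \<le> gamma2 (C\<times>C) UNIV D'" using g1 by simp
    qed
    thus ?thesis by simp
  qed
  show ?thesis using part1[OF fin assms(2)] part3[OF fin assms(2)] p2 by blast
qed

end
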